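(* Fix a context-free grammar $G=(N,\Sigma,P,S)$. Let $M=(V,E,L)$ be a finite directed edge-labeled graph with $L\subseteq\Sigma$, $E\subseteq V\times L\times V$, and no two parallel edges with the same label, and let $V_s,V_f\subseteq V$ be sets of start and final vertices. Then the worst-case space complexity of the GLL-based graph parsing algorithm (described in the context) run on $G$ and $M$ is $O(|V|^3+|E|)$, the constants depending only on $G$.
   Context: Paths and queries: a path in $M$ is a sequence of edges $(v_0,l_0,v_1),(v_1,l_1,v_2),\dots,(v_{n-1},l_{n-1},v_n)$ with $n\ge 1$; its word is $l_0l_1\cdots l_{n-1}$. The algorithm builds a representation of all paths $p$ from a vertex of $V_s$ to a vertex of $V_f$ whose word belongs to $\mathcal{L}(G)$. The GLL-based graph parsing algorithm: it is the table-driven generalized LL (GLL) parsing algorithm in which input positions are vertices of $M$ instead of indices into a string. A grammar slot is a production with a dot, $X\to\alpha\cdot\beta$. The algorithm maintains a graph-structured stack (GSS) whose nodes are labeled by pairs (grammar slot, vertex); descriptors $(L,u,i,w)$ with $L$ a grammar slot, $u$ a GSS node, $i\in V$ the current position and $w$ an SPPF node (or a dummy); a working set $R$ of descriptors to process, a set $U$ of all descriptors ever created (a descriptor is added to $R$ only if it is not already in $U$), and a set $P$ of popped (GSS node, SPPF node) pairs. Initially $R$ contains one initial descriptor for each vertex in $V_s$. Processing a descriptor at slot $X\to\alpha\cdot x\beta$ at vertex $i$: if $x$ is a terminal, then for every outgoing edge $e$ of $i$ with label $x$, the terminal SPPF node for $e$ is created/reused, combined with the current SPPF node, and a descriptor with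 slot $X\to\alpha x\cdot\beta$ and position the target of $e$ is added; if $x$ is a nonterminal, a GSS node for $(X\to\alpha x\cdot\beta, i)$ is created/reused (with an edge to the current GSS node labeled by the current SPPF node), and for every slot in the union, over outgoing edges $e$ of $i$, of the LL parse-table entries for $x$ and the label of $e$, a descriptor at position $i$ is added; at a slot $X\to\alpha\cdot$ the standard GLL pop operation is performed. All other operations (add, pop, create, SPPF node construction) are those of standard GLL. The algorithm terminates when $R$ is empty. The output is a binarized Shared Packed Parse Forest (SPPF) with terminal nodes $(v_0,T,v_1)$ for edges $(v_0,T,v_1)\in E$, $\varepsilon$-nodes $(v,\varepsilon,v)$, nonterminal nodes $(v_0,A,v_1)$, intermediate nodes $(v_0,t,v_1)$ with $t$ a grammar slot, and packed nodes $(A\to\alpha\cdot\beta,v)$ (children of nonterminal/intermediate nodes, with at most two children), each node created at most once per label. *)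

theory Defs
  imports Main
begin

datatype ('n,'t) sym = NT 'n | T 't

text \<open>A context-free grammar is given by a finite set of productions
  Pr :: ('n \<times> ('n,'t) sym list) set and a start nonterminal S; nonterminals
  and terminals are the elements of the types 'n and 't.\<close>

inductive nullable_sym :: "('n \<times> ('n,'t) sym list) set \<Rightarrow> ('n,'t) sym \<Rightarrow> bool"
  for Pr where
  "(A, \<alpha>) \<in> Pr \<Longrightarrow> \<forall>x\<in>set \<alpha>. nullable_sym Pr x \<Longrightarrow> nullable_sym Pr (NT A)"

definition nullable_w :: "('n \<times> ('n,'t) sym list) set \<Rightarrow> ('n,'t) sym list \<Rightarrow> bool" where
  "nullable_w Pr \<alpha> \<longleftrightarrow> (\<forall>x\<in>set \<alpha>. nullable_sym Pr x)"

inductive first_w :: "('n \<times> ('n,'t) sym list) set \<Rightarrow> ('n,'t) sym list \<Rightarrow> 't \<Rightarrow> bool"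
  for Pr where
  "first_w Pr (T a # xs) a"
| "(A, \<alpha>) \<in> Pr \<Longrightarrow> first_w Pr \<alpha> a \<Longrightarrow> first_w Pr (NT A # xs) a"
| "nullable_sym Pr x \<Longrightarrow> first_w Pr xs a \<Longrightarrow> first_w Pr (x # xs) a"

inductive follow :: "('n \<times> ('n,'t) sym list) set \<Rightarrow> 'n \<Rightarrow> 't \<Rightarrow> bool"
  for Pr where
  "(B, \<gamma> @ NT A # \<delta>) \<in> Pr \<Longrightarrow> first_w Pr \<delta> a \<Longrightarrow> follow Pr A a"
| "(B, \<gamma> @ NT A # \<delta>) \<in> Pr \<Longrightarrow> nullable_w Pr \<delta> \<Longrightarrow> follow Pr B a \<Longrightarrow> follow Pr A a"

text \<open>Slot X \<alpha> \<beta> is the grammar slot X \<rightarrow> \<alpha>\<cdot>\<beta>.\<close>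
datatype ('n,'t) slot = Slot 'n "('n,'t) sym list" "('n,'t) sym list"

definition ll_table :: "('n \<times> ('n,'t) sym list) set \<Rightarrow> 'n \<Rightarrow> 't \<Rightarrow> ('n,'t) slot set" where
  "ll_table Pr A a = {Slot A [] \<alpha> | \<alpha>. (A, \<alpha>) \<in> Pr \<and>
      (first_w Pr \<alpha> a \<or> (nullable_w Pr \<alpha> \<and> follow Pr A a))}"

definition tbl_union :: "('n \<times> ('n,'t) sym list) set \<Rightarrow> ('v \<times> 't \<times> 'v) set \<Rightarrow> 'n \<Rightarrow> 'v \<Rightarrow> ('n,'t) slot set" where
  "tbl_union Pr E A i = (\<Union>e\<in>{e\<in>E. fst e = i}. ll_table Pr A (fst (snd e)))"

text \<open>GSS-node / descriptor labels: the GLL initial label L0, or a grammar slot.\<close>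
datatype ('n,'t) lbl = L0 | LS "('n,'t) slot"

text \<open>SPPF nodes (symbol/intermediate nodes, plus the dummy node \$).\<close>
datatype ('n,'t,'v) snode =
    SDummy
  | STerm 'v 't 'v
  | SEps 'v
  | SNT 'v 'n 'v
  | SInt 'v "('n,'t) slot" 'v

fun lext :: "('n,'t,'v) snode \<Rightarrow> 'v" where
  "lext (STerm a _ _) = a" | "lext (SEps a) = a" | "lext (SNT a _ _) = a"
| "lext (SInt a _ _) = a" | "lext SDummy = undefined"

fun rext :: "('n,'t,'v) snode \<Rightarrow> 'v" where
  "rext (STerm _ _ b) = b" | "rext (SEps b) = b" | "rext (SNT _ _ b) = b"
| "rext (SInt _ _ b) = b" | "rext SDummy = undefined"

type_synonym ('n,'t,'v) gss = "('n,'t) lbl \<times> 'v"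
type_synonym ('n,'t,'v) desc = "('n,'t) lbl \<times> ('n,'t,'v) gss \<times> 'v \<times> ('n,'t,'v) snode"
text \<open>A packed node: (parent, slot, pivot, left child (SDummy if none), right child).\<close>
type_synonym ('n,'t,'v) packed =
  "('n,'t,'v) snode \<times> ('n,'t) slot \<times> 'v \<times> ('n,'t,'v) snode \<times> ('n,'t,'v) snode"

record ('n,'t,'v) gll_state =
  Rs  :: "('n,'t,'v) desc set"                                  \<comment> \<open>working set R\<close>
  Us  :: "('n,'t,'v) desc set"                                  \<comment> \<open>all descriptors U\<close>
  Ps  :: "(('n,'t,'v) gss \<times> ('n,'t,'v) snode) set"              \<comment> \<open>popped set P\<close>
  GN  :: "('n,'t,'v) gss set"                                   \<comment> \<open>GSS nodes\<close>
  GE  :: "(('n,'t,'v) gss \<times> ('n,'t,'v) snode \<times> ('n,'t,'v) gss) set" \<comment> \<open>labelled GSS edges\<close>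
  SN  :: "('n,'t,'v) snode set"                                 \<comment> \<open>SPPF symbol/intermediate nodes\<close>
  PK  :: "('n,'t,'v) packed set"                                \<comment> \<open>SPPF packed nodes (with their children)\<close>

text \<open>add for a set of descriptors (equivalent to repeated add).\<close>
definition add_descs :: "('n,'t,'v) desc set \<Rightarrow> ('n,'t,'v) gll_state \<Rightarrow> ('n,'t,'v) gll_state" where
  "add_descs D \<sigma> = \<sigma>\<lparr>Rs := Rs \<sigma> \<union> (D - Us \<sigma>), Us := Us \<sigma> \<union> D\<rparr>"

text \<open>getNodeP(X \<rightarrow> \<alpha>\<cdot>\<beta>, w, z) of standard GLL (Scott and Johnstone):
  the returned node, and the (symbol and packed) nodes it creates if absent.\<close>
definition gnp_trivial :: "('n \<times> ('n,'t) sym list) set \<Rightarrow> ('n,'t) slot \<Rightarrow> bool" where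
  "gnp_trivial Pr sl = (case sl of Slot X \<alpha> \<beta> \<Rightarrow>
      \<beta> \<noteq> [] \<and> (\<exists>x. \<alpha> = [x] \<and> \<not> nullable_sym Pr x))"

definition gnp_node :: "('n \<times> ('n,'t) sym list) set \<Rightarrow> ('n,'t) slot \<Rightarrow> ('n,'t,'v) snode \<Rightarrow> ('n,'t,'v) snode \<Rightarrow> ('n,'t,'v) snode" where
  "gnp_node Pr sl w z = (if gnp_trivial Pr sl then z else
     (case sl of Slot X \<alpha> \<beta> \<Rightarrow>
       let i = rext z; j = (if w = SDummy then lext z else lext w) in
       if \<beta> = [] then SNT j X i else SInt j sl i))"

definition gnp_packed :: "('n \<times> ('n,'t) sym list) set \<Rightarrow> ('n,'t) slot \<Rightarrow> ('n,'t,'v) snode \<Rightarrow> ('n,'t,'v) snode \<Rightarrow> ('n,'t,'v) packed set" where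
  "gnp_packed Pr sl w z = (if gnp_trivial Pr sl then {} else
     {(gnp_node Pr sl w z, sl, lext z, w, z)})"

definition get_node_p :: "('n \<times> ('n,'t) sym list) set \<Rightarrow> ('n,'t) slot \<Rightarrow> ('n,'t,'v) snode \<Rightarrow> ('n,'t,'v) snode
    \<Rightarrow> ('n,'t,'v) gll_state \<Rightarrow> ('n,'t,'v) gll_state" where
  "get_node_p Pr sl w z \<sigma> = \<sigma>\<lparr>SN := SN \<sigma> \<union> {gnp_node Pr sl w z},
                               PK := PK \<sigma> \<union> gnp_packed Pr sl w z\<rparr>"

definition gll_pop :: "('n \<times> ('n,'t) sym list) set \<Rightarrow> ('n,'t,'v) gss \<Rightarrow> 'v \<Rightarrow> ('n,'t,'v) snode
    \<Rightarrow> ('n,'t,'v) gll_state \<Rightarrow> ('n,'t,'v) gll_state" where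
  "gll_pop Pr u i z \<sigma> = (case fst u of
      L0 \<Rightarrow> \<sigma>
    | LS sl \<Rightarrow>
        let \<sigma>1 = \<sigma>\<lparr>Ps := Ps \<sigma> \<union> {(u, z)}\<rparr>;
            es = {(w, v). (u, w, v) \<in> GE \<sigma>};
            \<sigma>2 = \<sigma>1\<lparr>SN := SN \<sigma>1 \<union> {gnp_node Pr sl w z | w v. (w, v) \<in> es},
                      PK := PK \<sigma>1 \<union> (\<Union>(w, v)\<in>es. gnp_packed Pr sl w z)\<rparr>
        in add_descs {(LS sl, v, i, gnp_node Pr sl w z) | w v. (w, v) \<in> es} \<sigma>2)"

definition gll_create :: "('n \<times> ('n,'t) sym list) set \<Rightarrow> ('n,'t) slot \<Rightarrow> ('n,'t,'v) gss \<Rightarrow> 'v \<Rightarrow> ('n,'t,'v) snode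
    \<Rightarrow> ('n,'t,'v) gll_state \<Rightarrow> ('n,'t,'v) gll_state" where
  "gll_create Pr sl u i w \<sigma> = (
     let v = (LS sl, i);
         \<sigma>1 = \<sigma>\<lparr>GN := GN \<sigma> \<union> {v}\<rparr>
     in if (v, w, u) \<in> GE \<sigma> then \<sigma>1
        else
          let \<sigma>2 = \<sigma>1\<lparr>GE := GE \<sigma>1 \<union> {(v, w, u)}\<rparr>;
              zs = {z. (v, z) \<in> Ps \<sigma>2};
              \<sigma>3 = \<sigma>2\<lparr>SN := SN \<sigma>2 \<union> gnp_node Pr sl w ` zs,
                        PK := PK \<sigma>2 \<union> (\<Union>z\<in>zs. gnp_packed Pr sl w z)\<rparr>
          in add_descs {(LS sl, u, rext z, gnp_node Pr sl w z) | z. z \<in> zs} \<sigma>3)"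

definition gll_process :: "('n \<times> ('n,'t) sym list) set \<Rightarrow> 'n \<Rightarrow> ('v \<times> 't \<times> 'v) set
    \<Rightarrow> ('n,'t,'v) desc \<Rightarrow> ('n,'t,'v) gll_state \<Rightarrow> ('n,'t,'v) gll_state" where
  "gll_process Pr S E d \<sigma> = (case d of (L, u, i, w) \<Rightarrow>
     (case L of
        L0 \<Rightarrow> add_descs {(LS s, u, i, SDummy) | s. s \<in> tbl_union Pr E S i} \<sigma>
      | LS (Slot X \<alpha> \<beta>) \<Rightarrow>
          (case \<beta> of
             [] \<Rightarrow>
               (if \<alpha> = [] then
                  let e = SEps i; sl = Slot X [] [];
                      \<sigma>1 = get_node_p Pr sl w e (\<sigma>\<lparr>SN := SN \<sigma> \<union> {e}\<rparr>)
                  in gll_pop Pr u i (gnp_node Pr sl w e) \<sigma>1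
                else gll_pop Pr u i w \<sigma>)
           | T a # \<beta>' \<Rightarrow>
               let sl = Slot X (\<alpha> @ [T a]) \<beta>';
                   es = {j. (i, a, j) \<in> E};
                   \<sigma>1 = \<sigma>\<lparr>SN := SN \<sigma> \<union> {STerm i a j | j. j \<in> es}
                                     \<union> {gnp_node Pr sl w (STerm i a j) | j. j \<in> es},
                            PK := PK \<sigma> \<union> (\<Union>j\<in>es. gnp_packed Pr sl w (STerm i a j))\<rparr>
               in add_descs {(LS sl, u, j, gnp_node Pr sl w (STerm i a j)) | j. j \<in> es} \<sigma>1
           | NT A # \<beta>' \<Rightarrow>
               let sl = Slot X (\<alpha> @ [NT A]) \<beta>';
                   \<sigma>1 = gll_create Pr sl u i w \<sigma>
               in add_descs {(LS s, (LS sl, i), i, SDummy) | s. s \<in> tbl_union Pr E A i} \<sigma>1)))"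

definition gll_step :: "('n \<times> ('n,'t) sym list) set \<Rightarrow> 'n \<Rightarrow> ('v \<times> 't \<times> 'v) set
    \<Rightarrow> ('n,'t,'v) gll_state \<Rightarrow> ('n,'t,'v) gll_state \<Rightarrow> bool" where
  "gll_step Pr S E \<sigma> \<sigma>' \<longleftrightarrow> (\<exists>d\<in>Rs \<sigma>. \<sigma>' = gll_process Pr S E d (\<sigma>\<lparr>Rs := Rs \<sigma> - {d}\<rparr>))"

definition gll_init :: "'v set \<Rightarrow> ('n,'t,'v) gll_state" where
  "gll_init Vs = \<lparr>Rs = {(L0, (L0, v), v, SDummy) | v. v \<in> Vs},
                 Us = {(L0, (L0, v), v, SDummy) | v. v \<in> Vs},
                 Ps = {}, GN = {(L0, v) | v. v \<in> Vs}, GE = {}, SN = {}, PK = {}\<rparr>"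

definition gll_reachable :: "('n \<times> ('n,'t) sym list) set \<Rightarrow> 'n \<Rightarrow> ('v \<times> 't \<times> 'v) set \<Rightarrow> 'v set
    \<Rightarrow> ('n,'t,'v) gll_state \<Rightarrow> bool" where
  "gll_reachable Pr S E Vs \<sigma> \<longleftrightarrow> (gll_step Pr S E)\<^sup>*\<^sup>* (gll_init Vs) \<sigma>"

definition gll_finite :: "('n,'t,'v) gll_state \<Rightarrow> bool" where
  "gll_finite \<sigma> \<longleftrightarrow> finite (Rs \<sigma>) \<and> finite (Us \<sigma>) \<and> finite (Ps \<sigma>) \<and> finite (GN \<sigma>)
      \<and> finite (GE \<sigma>) \<and> finite (SN \<sigma>) \<and> finite (PK \<sigma>)"

definition gll_space :: "('n,'t,'v) gll_state \<Rightarrow> nat" where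
  "gll_space \<sigma> = card (Rs \<sigma>) + card (Us \<sigma>) + card (Ps \<sigma>) + card (GN \<sigma>)
      + card (GE \<sigma>) + card (SN \<sigma>) + card (PK \<sigma>)"

end

theory Submission
  imports Defs
begin


datatype ('n,'t) cde = CT 't | CE | CN 'n | CI "('n,'t) slot" | CD

fun code :: "('n,'t,'v) snode \<Rightarrow> ('n,'t) cde" where
  "code (STerm _ a _) = CT a" | "code (SEps _) = CE" | "code (SNT _ X _) = CN X"
| "code (SInt _ s _) = CI s" | "code SDummy = CD"

fun recon :: "'v \<Rightarrow> 'v \<Rightarrow> ('n,'t) cde \<Rightarrow> ('n,'t,'v) snode" where
  "recon j i (CT a) = STerm j a i" | "recon j i CE = SEps j" | "recon j i (CN X) = SNT j X i"
| "recon j i (CI s) = SInt j s i" | "recon j i CD = SDummy"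

lemma recon_code: "n \<noteq> SDummy \<Longrightarrow> recon (lext n) (rext n) (code n) = n"
  by (cases n) auto

definition SLs :: "('n \<times> ('n,'t) sym list) set \<Rightarrow> ('n,'t) slot set" where
  "SLs Pr = {Slot X \<alpha> \<beta> | X \<alpha> \<beta>. (X, \<alpha> @ \<beta>) \<in> Pr}"
definition LBs :: "('n \<times> ('n,'t) sym list) set \<Rightarrow> ('n,'t) lbl set" where
  "LBs Pr = insert L0 (LS ` SLs Pr)"
definition TGs :: "('n \<times> ('n,'t) sym list) set \<Rightarrow> 't set" where
  "TGs Pr = {a. \<exists>X r. (X, r) \<in> Pr \<and> T a \<in> set r}"
definition CSs :: "('n \<times> ('n,'t) sym list) set \<Rightarrow> ('n,'t) cde set" where
  "CSs Pr = CT ` TGs Pr \<union> {CE} \<union> CN ` fst ` Pr \<union> CI ` SLs Pr"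

lemma finite_SLs: "finite Pr \<Longrightarrow> finite (SLs Pr)"
proof -
  assume f: "finite Pr"
  have "SLs Pr \<subseteq> (\<Union>(X, r)\<in>Pr. (\<lambda>k. Slot X (take k r) (drop k r)) ` {0..length r})"
  proof
    fix s assume "s \<in> SLs Pr"
    then obtain X \<alpha> \<beta> where s: "s = Slot X \<alpha> \<beta>" and p: "(X, \<alpha> @ \<beta>) \<in> Pr"
      unfolding SLs_def by blast
    show "s \<in> (\<Union>(X, r)\<in>Pr. (\<lambda>k. Slot X (take k r) (drop k r)) ` {0..length r})"
      using p s by (intro UN_I[of "(X, \<alpha> @ \<beta>)"]) (auto intro!: image_eqI[of _ _ "length \<alpha>"])
  qed
  moreover have "finite (\<Union>(X, r)\<in>Pr. (\<lambda>k. Slot X (take k r) (drop k r)) ` {0..length r})"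
    using f by auto
  ultimately show ?thesis by (rule finite_subset)
qed

lemma finite_TGs: "finite Pr \<Longrightarrow> finite (TGs Pr)"
proof -
  assume f: "finite Pr"
  have "TGs Pr \<subseteq> (\<Union>(X, r)\<in>Pr. T -` set r)" unfolding TGs_def by auto
  moreover have "finite (\<Union>(X, r)\<in>Pr. T -` set r)"
    using f by (auto intro!: finite_vimageI simp: inj_def)
  ultimately show ?thesis by (rule finite_subset)
qed

lemma finite_LBs: "finite Pr \<Longrightarrow> finite (LBs Pr)"
  by (simp add: LBs_def finite_SLs)
lemma finite_CSs: "finite Pr \<Longrightarrow> finite (CSs Pr)"
  by (simp add: CSs_def finite_SLs finite_TGs)



definition gd :: "('n \<times> ('n,'t) sym list) set \<Rightarrow> 'v set \<Rightarrow> ('n,'t,'v) snode \<Rightarrow> bool" where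
  "gd Pr V n \<longleftrightarrow> n \<noteq> SDummy \<and> lext n \<in> V \<and> rext n \<in> V \<and> code n \<in> CSs Pr"

definition dinv :: "('n \<times> ('n,'t) sym list) set \<Rightarrow> 'v set \<Rightarrow> ('n,'t,'v) desc \<Rightarrow> bool" where
  "dinv Pr V d \<longleftrightarrow> (case d of (L, (L', k), i, w) \<Rightarrow>
     L \<in> LBs Pr \<and> L' \<in> LBs Pr \<and> k \<in> V \<and> i \<in> V
     \<and> ((w = SDummy \<and> i = k) \<or> (gd Pr V w \<and> lext w = k \<and> rext w = i))
     \<and> (L = L0 \<longrightarrow> w = SDummy)
     \<and> (\<forall>X \<alpha> \<beta>. L = LS (Slot X \<alpha> \<beta>) \<longrightarrow> (\<alpha> = [] \<longleftrightarrow> w = SDummy)))"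

definition einv :: "('n \<times> ('n,'t) sym list) set \<Rightarrow> 'v set
   \<Rightarrow> (('n,'t,'v) gss \<times> ('n,'t,'v) snode \<times> ('n,'t,'v) gss) \<Rightarrow> bool" where
  "einv Pr V e \<longleftrightarrow> (case e of ((L, i), w, (L', k)) \<Rightarrow>
     (\<exists>X \<alpha> \<beta>. L = LS (Slot X \<alpha> \<beta>) \<and> \<alpha> \<noteq> [] \<and> Slot X \<alpha> \<beta> \<in> SLs Pr
         \<and> (gnp_trivial Pr (Slot X \<alpha> \<beta>) \<longrightarrow> w = SDummy))
     \<and> L' \<in> LBs Pr \<and> i \<in> V \<and> k \<in> V
     \<and> ((w = SDummy \<and> i = k) \<or> (gd Pr V w \<and> lext w = k \<and> rext w = i)))"

definition pinv :: "('n \<times> ('n,'t) sym list) set \<Rightarrow> 'v set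
   \<Rightarrow> (('n,'t,'v) gss \<times> ('n,'t,'v) snode) \<Rightarrow> bool" where
  "pinv Pr V p \<longleftrightarrow> (case p of ((L, k), z) \<Rightarrow> L \<in> LBs Pr \<and> k \<in> V \<and> gd Pr V z \<and> lext z = k)"

definition kinv :: "('n \<times> ('n,'t) sym list) set \<Rightarrow> 'v set \<Rightarrow> ('n,'t,'v) packed \<Rightarrow> bool" where
  "kinv Pr V x \<longleftrightarrow> (case x of (p, sl, piv, w, z) \<Rightarrow>
     p = gnp_node Pr sl w z \<and> piv = lext z \<and> sl \<in> SLs Pr \<and> gd Pr V z
     \<and> (w = SDummy \<or> (gd Pr V w \<and> rext w = lext z)))"

definition Inv :: "('n \<times> ('n,'t) sym list) set \<Rightarrow> 'v set \<Rightarrow> ('n,'t,'v) gll_state \<Rightarrow> bool" where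
  "Inv Pr V \<sigma> \<longleftrightarrow> Ball (Rs \<sigma>) (dinv Pr V) \<and> Ball (Us \<sigma>) (dinv Pr V) \<and> Ball (Ps \<sigma>) (pinv Pr V)
     \<and> GN \<sigma> \<subseteq> LBs Pr \<times> V \<and> Ball (GE \<sigma>) (einv Pr V) \<and> Ball (SN \<sigma>) (gd Pr V)
     \<and> Ball (PK \<sigma>) (kinv Pr V)"

lemma gnp_good:
  assumes "sl \<in> SLs Pr" "gd Pr V z"
    "(w = SDummy \<and> lext z = k) \<or> (gd Pr V w \<and> lext w = k \<and> rext w = lext z)"
    "gnp_trivial Pr sl \<longrightarrow> w = SDummy"
  shows "gd Pr V (gnp_node Pr sl w z) \<and> lext (gnp_node Pr sl w z) = k
         \<and> rext (gnp_node Pr sl w z) = rext z"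
proof (cases "gnp_trivial Pr sl")
  case True
  then show ?thesis using assms by (auto simp: gnp_node_def)
next
  case False
  obtain X \<alpha> \<beta> where sl: "sl = Slot X \<alpha> \<beta>" by (cases sl) auto
  have kV: "k \<in> V" using assms(2,3) by (auto simp: gd_def)
  have X: "CN X \<in> CSs Pr" "CI sl \<in> CSs Pr" using assms(1) sl
    by (auto simp: CSs_def SLs_def image_iff intro!: bexI[where x="(X, \<alpha> @ \<beta>)"])
  show ?thesis using False assms(2,3) kV X sl
    by (auto simp: gnp_node_def gd_def Let_def)
qed

lemma gnp_packed_kinv:
  assumes "sl \<in> SLs Pr" "gd Pr V z" "w = SDummy \<or> (gd Pr V w \<and> rext w = lext z)"
  shows "Ball (gnp_packed Pr sl w z) (kinv Pr V)"
  using assms by (auto simp: gnp_packed_def kinv_def)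

lemma add_inv:
  "Inv Pr V \<sigma> \<Longrightarrow> Ball D (dinv Pr V) \<Longrightarrow> Inv Pr V (add_descs D \<sigma>)"
  by (auto simp: Inv_def add_descs_def)



lemma pop_inv:
  assumes I: "Inv Pr V \<sigma>" and u: "fst u \<in> LBs Pr" "snd u \<in> V" and iV: "i \<in> V"
    and z: "gd Pr V z" "lext z = snd u" "rext z = i"
  shows "Inv Pr V (gll_pop Pr u i z \<sigma>)"
proof (cases "fst u")
  case L0
  then show ?thesis using I by (simp add: gll_pop_def)
next
  case (LS sl)
  obtain k where uk: "u = (LS sl, k)" using LS by (cases u) auto
  have key: "\<And>w v. (u, w, v) \<in> GE \<sigma> \<Longrightarrow>
     gd Pr V (gnp_node Pr sl w z) \<and> lext (gnp_node Pr sl w z) = snd v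
      \<and> rext (gnp_node Pr sl w z) = i \<and> Ball (gnp_packed Pr sl w z) (kinv Pr V)
      \<and> dinv Pr V (LS sl, v, i, gnp_node Pr sl w z)"
  proof -
    fix w v assume e: "(u, w, v) \<in> GE \<sigma>"
    obtain L' k' where v: "v = (L', k')" by (cases v) auto
    have ei: "einv Pr V (u, w, v)" using I e by (auto simp: Inv_def)
    then obtain X \<alpha> \<beta> where sl: "sl = Slot X \<alpha> \<beta>" "\<alpha> \<noteq> []" "Slot X \<alpha> \<beta> \<in> SLs Pr"
        "gnp_trivial Pr (Slot X \<alpha> \<beta>) \<longrightarrow> w = SDummy"
      and rest: "L' \<in> LBs Pr" "k \<in> V" "k' \<in> V"
        "(w = SDummy \<and> k = k') \<or> (gd Pr V w \<and> lext w = k' \<and> rext w = k)"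
      unfolding einv_def uk v by auto
    have g: "gd Pr V (gnp_node Pr sl w z) \<and> lext (gnp_node Pr sl w z) = k'
         \<and> rext (gnp_node Pr sl w z) = rext z"
      apply (rule gnp_good)
      using sl rest z uk by auto
    have pk: "Ball (gnp_packed Pr sl w z) (kinv Pr V)"
      apply (rule gnp_packed_kinv) using sl rest z uk by auto
    have slL: "LS sl \<in> LBs Pr" using sl by (simp add: LBs_def)
    show "?thesis w v" using g pk z iV rest sl slL v
      by (auto simp: dinv_def gd_def)
  qed
  show ?thesis
    unfolding gll_pop_def LS
    apply (simp add: Let_def)
    apply (rule add_inv)
    subgoal using I u z uk key unfolding Inv_def pinv_def
      by (auto simp: LS)
    subgoal using key by auto
    done
qed



lemma create_inv:
  assumes I: "Inv Pr V \<sigma>" and sl: "sl = Slot X \<alpha> \<beta>" "\<alpha> \<noteq> []" "Slot X \<alpha> \<beta> \<in> SLs Pr"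
        "gnp_trivial Pr (Slot X \<alpha> \<beta>) \<longrightarrow> w = SDummy"
    and u: "u = (L', k)" "L' \<in> LBs Pr" "k \<in> V" and iV: "i \<in> V"
    and w: "(w = SDummy \<and> i = k) \<or> (gd Pr V w \<and> lext w = k \<and> rext w = i)"
  shows "Inv Pr V (gll_create Pr sl u i w \<sigma>)"
proof -
  have slL: "LS sl \<in> LBs Pr" using sl by (simp add: LBs_def)
  have ei: "einv Pr V ((LS sl, i), w, u)"
    using sl u iV w unfolding einv_def by auto
  have key: "\<And>z. ((LS sl, i), z) \<in> Ps \<sigma> \<Longrightarrow>
     gd Pr V (gnp_node Pr sl w z) \<and> Ball (gnp_packed Pr sl w z) (kinv Pr V)
      \<and> dinv Pr V (LS sl, u, rext z, gnp_node Pr sl w z)"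
  proof -
    fix z assume p: "((LS sl, i), z) \<in> Ps \<sigma>"
    have z: "gd Pr V z" "lext z = i" using I p by (auto simp: Inv_def pinv_def)
    have g: "gd Pr V (gnp_node Pr sl w z) \<and> lext (gnp_node Pr sl w z) = k
         \<and> rext (gnp_node Pr sl w z) = rext z"
      apply (rule gnp_good) using sl w z by auto
    have pk: "Ball (gnp_packed Pr sl w z) (kinv Pr V)"
      apply (rule gnp_packed_kinv) using sl w z by auto
    show "?thesis z" using g pk z iV u sl slL
      by (auto simp: dinv_def gd_def)
  qed
  have I1: "Inv Pr V (\<sigma>\<lparr>GN := GN \<sigma> \<union> {(LS sl, i)}\<rparr>)"
    using I slL iV by (auto simp: Inv_def)
  show ?thesis
  proof (cases "((LS sl, i), w, u) \<in> GE \<sigma>")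
    case True
    then show ?thesis using I1 by (simp add: gll_create_def Let_def)
  next
    case False
    show ?thesis
      unfolding gll_create_def Let_def using False
      apply simp
      apply (rule add_inv)
      subgoal using I slL iV ei key unfolding Inv_def by auto
      subgoal using key by auto
      done
  qed
qed



lemma tbl_slot: "s \<in> tbl_union Pr E A i \<Longrightarrow> \<exists>\<alpha>. s = Slot A [] \<alpha> \<and> Slot A [] \<alpha> \<in> SLs Pr"
  by (auto simp: tbl_union_def ll_table_def SLs_def)

lemma tbl_dinv:
  fixes Pr :: "('n \<times> ('n,'t) sym list) set" and u :: "('n,'t,'v) gss"
  assumes "fst u \<in> LBs Pr" "snd u = i" "i \<in> V"
  shows "Ball {(LS s, u, i, SDummy :: ('n,'t,'v) snode) | s. s \<in> tbl_union Pr E A i} (dinv Pr V)"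
proof
  fix d :: "('n,'t,'v) desc" assume "d \<in> {(LS s, u, i, SDummy) | s. s \<in> tbl_union Pr E A i}"
  then obtain s where d: "d = (LS s, u, i, SDummy)" and s: "s \<in> tbl_union Pr E A i" by blast
  obtain \<alpha> where "s = Slot A [] \<alpha>" "Slot A [] \<alpha> \<in> SLs Pr" using tbl_slot[OF s] by blast
  then show "dinv Pr V d" using assms d by (cases u) (auto simp: dinv_def LBs_def)
qed

lemma process_inv:
  assumes I: "Inv Pr V \<sigma>" and d: "dinv Pr V d" and EV: "E \<subseteq> V \<times> UNIV \<times> V"
  shows "Inv Pr V (gll_process Pr S E d \<sigma>)"
proof -
  obtain L L' k i w where dd: "d = (L, (L', k), i, w)" by (cases d) auto
  have dI: "L \<in> LBs Pr" "L' \<in> LBs Pr" "k \<in> V" "i \<in> V"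
     "(w = SDummy \<and> i = k) \<or> (gd Pr V w \<and> lext w = k \<and> rext w = i)"
     "L = L0 \<longrightarrow> w = SDummy"
     "\<And>X \<alpha> \<beta>. L = LS (Slot X \<alpha> \<beta>) \<Longrightarrow> (\<alpha> = [] \<longleftrightarrow> w = SDummy)"
    using d unfolding dd dinv_def by auto
  show ?thesis
  proof (cases L)
    case L0
    have ik: "i = k" "w = SDummy" using dI(5,6) L0 by (auto simp: gd_def)
    show ?thesis unfolding dd gll_process_def using L0
      apply simp
      apply (rule add_inv[OF I])
      apply (rule tbl_dinv)
      using dI ik by auto
  next
    case (LS sl)
    obtain X \<alpha> \<beta> where sl: "sl = Slot X \<alpha> \<beta>" by (cases sl) auto
    have slS: "Slot X \<alpha> \<beta> \<in> SLs Pr" using dI(1) LS sl by (auto simp: LBs_def)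
    have aw: "\<alpha> = [] \<longleftrightarrow> w = SDummy" using dI(7) LS sl by blast
    show ?thesis
    proof (cases \<beta>)
      case Nil
      show ?thesis
      proof (cases "\<alpha> = []")
        case True
        have wD: "w = SDummy" "i = k" using aw True dI(5) by (auto simp: gd_def)
        have s0: "Slot X [] [] \<in> SLs Pr" using slS True Nil by simp
        have X: "CN X \<in> CSs Pr" using s0
          by (auto simp: CSs_def SLs_def image_iff intro!: bexI[where x="(X, [])"])
        have ntriv: "\<not> gnp_trivial Pr (Slot X [] [])" by (simp add: gnp_trivial_def)
        have gn: "gnp_node Pr (Slot X [] []) SDummy (SEps i) = SNT i X i"
          using ntriv by (simp add: gnp_node_def)
        have ge: "gd Pr V (SEps i)" "gd Pr V (SNT i X i)" using dI X
          by (auto simp: gd_def CSs_def)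
        have I1: "Inv Pr V (get_node_p Pr (Slot X [] []) SDummy (SEps i)
                   (\<sigma>\<lparr>SN := SN \<sigma> \<union> {SEps i}\<rparr>))"
          using I ge s0 gn unfolding Inv_def get_node_p_def
          by (auto simp: gnp_packed_def kinv_def ntriv)
        have eq: "gll_process Pr S E d \<sigma> = gll_pop Pr (L', k) i (SNT i X i)
           (get_node_p Pr (Slot X [] []) SDummy (SEps i) (\<sigma>\<lparr>SN := SN \<sigma> \<union> {SEps i}\<rparr>))"
          unfolding dd gll_process_def using LS sl Nil True wD gn by (simp add: Let_def)
        show ?thesis unfolding eq
          by (rule pop_inv[OF I1]) (use dI ge wD in auto)
      next
        case False
        have wG: "gd Pr V w" "lext w = k" "rext w = i" using aw False dI(5) by auto
        show ?thesis unfolding dd gll_process_def using LS sl Nil False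
          apply simp
          apply (rule pop_inv[OF I])
          using dI wG by auto
      qed
    next
      case (Cons x \<beta>')
      show ?thesis
      proof (cases x)
        case (T a)
        let ?sl = "Slot X (\<alpha> @ [T a]) \<beta>'"
        have slS': "?sl \<in> SLs Pr" using slS Cons T by (auto simp: SLs_def)
        have aT: "a \<in> TGs Pr" using slS Cons T by (force simp: SLs_def TGs_def)
        have triv: "gnp_trivial Pr ?sl \<longrightarrow> w = SDummy"
          using aw by (auto simp: gnp_trivial_def)
        have key: "\<And>j. (i, a, j) \<in> E \<Longrightarrow>
          gd Pr V (STerm i a j) \<and> gd Pr V (gnp_node Pr ?sl w (STerm i a j))
          \<and> Ball (gnp_packed Pr ?sl w (STerm i a j)) (kinv Pr V)
          \<and> dinv Pr V (LS ?sl, (L', k), j, gnp_node Pr ?sl w (STerm i a j))"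
        proof -
          fix j assume e: "(i, a, j) \<in> E"
          have jV: "j \<in> V" using e EV by auto
          have gt: "gd Pr V (STerm i a j)" using jV dI aT by (auto simp: gd_def CSs_def)
          have g: "gd Pr V (gnp_node Pr ?sl w (STerm i a j))
              \<and> lext (gnp_node Pr ?sl w (STerm i a j)) = k
              \<and> rext (gnp_node Pr ?sl w (STerm i a j)) = rext (STerm i a j)"
            using gnp_good[OF slS' gt, of w k] dI(5) triv by auto
          have pk: "Ball (gnp_packed Pr ?sl w (STerm i a j)) (kinv Pr V)"
            using gnp_packed_kinv[OF slS' gt, of w] dI(5) by auto
          have sL: "LS ?sl \<in> LBs Pr" using slS' by (simp add: LBs_def)
          show "?thesis j" using gt g pk sL dI jV by (auto simp: dinv_def gd_def)
        qed
        show ?thesis unfolding dd gll_process_def using LS sl Cons T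
          apply (simp add: Let_def)
          apply (rule add_inv)
          subgoal using I key unfolding Inv_def by auto
          subgoal using key by auto
          done
      next
        case (NT A)
        let ?sl = "Slot X (\<alpha> @ [NT A]) \<beta>'"
        have slS': "?sl \<in> SLs Pr" using slS Cons NT by (auto simp: SLs_def)
        have triv: "gnp_trivial Pr ?sl \<longrightarrow> w = SDummy"
          using aw by (auto simp: gnp_trivial_def)
        have I1: "Inv Pr V (gll_create Pr ?sl (L', k) i w \<sigma>)"
          by (rule create_inv[OF I refl _ slS' triv refl]) (use dI in auto)
        have sL: "LS ?sl \<in> LBs Pr" using slS' by (simp add: LBs_def)
        show ?thesis unfolding dd gll_process_def using LS sl Cons NT
          apply (simp add: Let_def)
          apply (rule add_inv[OF I1])
          apply (rule tbl_dinv)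
          using sL dI by auto
      qed
    qed
  qed
qed



lemma init_inv: "Vs \<subseteq> V \<Longrightarrow> Inv Pr V (gll_init Vs)"
  by (auto simp: Inv_def gll_init_def dinv_def LBs_def)

lemma reach_inv:
  assumes "gll_reachable Pr S E Vs \<sigma>" "Vs \<subseteq> V" "E \<subseteq> V \<times> UNIV \<times> V"
  shows "Inv Pr V \<sigma>"
  using assms(1) unfolding gll_reachable_def
proof (induction rule: rtranclp_induct)
  case base
  then show ?case using init_inv[OF assms(2)] .
next
  case (step \<sigma> \<sigma>')
  then obtain d where d: "d \<in> Rs \<sigma>" "\<sigma>' = gll_process Pr S E d (\<sigma>\<lparr>Rs := Rs \<sigma> - {d}\<rparr>)"
    unfolding gll_step_def by blast
  have I: "Inv Pr V (\<sigma>\<lparr>Rs := Rs \<sigma> - {d}\<rparr>)" using step.IH by (auto simp: Inv_def)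
  have dI: "dinv Pr V d" using step.IH d(1) by (auto simp: Inv_def)
  show ?case unfolding d(2) by (rule process_inv[OF I dI assms(3)])
qed

lemma sub_card:
  assumes "A \<subseteq> f ` B" "finite B"
  shows "finite A \<and> card A \<le> card B"
  using assms by (meson card_image_le finite_imageI finite_subset card_mono le_trans)

lemma gd_sub: "{x. gd Pr V x} \<subseteq> (\<lambda>(j, i, c). recon j i c) ` (V \<times> V \<times> CSs Pr)"
proof
  fix x assume "x \<in> {x. gd Pr V x}"
  hence g: "gd Pr V x" by simp
  show "x \<in> (\<lambda>(j, i, c). recon j i c) ` (V \<times> V \<times> CSs Pr)"
    using g recon_code[of x] by (auto simp: gd_def intro!: image_eqI[of _ _ "(lext x, rext x, code x)"])
qed

lemma dinv_sub: "{d. dinv Pr V d} \<subseteq> (\<lambda>(L, L', k, i, c). (L, (L', k), i, recon k i c))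
   ` (LBs Pr \<times> LBs Pr \<times> V \<times> V \<times> insert CD (CSs Pr))"
proof
  fix d assume "d \<in> {d. dinv Pr V d}"
  hence g: "dinv Pr V d" by simp
  obtain L L' k i w where dd: "d = (L, (L', k), i, w)" by (cases d) auto
  show "d \<in> (\<lambda>(L, L', k, i, c). (L, (L', k), i, recon k i c))
   ` (LBs Pr \<times> LBs Pr \<times> V \<times> V \<times> insert CD (CSs Pr))"
    using g recon_code[of w] unfolding dd dinv_def
    by (auto simp: gd_def intro!: image_eqI[of _ _ "(L, L', k, i, code w)"])
qed

lemma einv_sub: "{e. einv Pr V e} \<subseteq> (\<lambda>(L, L', i, k, c). ((L, i), recon k i c, (L', k)))
   ` (LBs Pr \<times> LBs Pr \<times> V \<times> V \<times> insert CD (CSs Pr))"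
proof
  fix e assume "e \<in> {e. einv Pr V e}"
  hence g: "einv Pr V e" by simp
  obtain L i w L' k where dd: "e = ((L, i), w, (L', k))" by (cases e) auto
  show "e \<in> (\<lambda>(L, L', i, k, c). ((L, i), recon k i c, (L', k)))
   ` (LBs Pr \<times> LBs Pr \<times> V \<times> V \<times> insert CD (CSs Pr))"
    using g recon_code[of w] unfolding dd einv_def
    by (auto simp: gd_def LBs_def intro!: image_eqI[of _ _ "(L, L', i, k, code w)"])
qed

lemma pinv_sub: "{p. pinv Pr V p} \<subseteq> (LBs Pr \<times> V) \<times> {x. gd Pr V x}"
  by (auto simp: pinv_def)

lemma kinv_sub: "{x. kinv Pr V x} \<subseteq>
   (\<lambda>(sl, a, b, c, cw, cz). (gnp_node Pr sl (recon a b cw) (recon b c cz), sl, b,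
        recon a b cw, recon b c cz))
   ` (SLs Pr \<times> V \<times> V \<times> V \<times> insert CD (CSs Pr) \<times> CSs Pr)"
proof
  fix x assume "x \<in> {x. kinv Pr V x}"
  hence g: "kinv Pr V x" by simp
  obtain p sl piv w z where dd: "x = (p, sl, piv, w, z)" by (cases x) auto
  have z: "gd Pr V z" "recon (lext z) (rext z) (code z) = z"
    using g recon_code[of z] unfolding dd kinv_def by (auto simp: gd_def)
  show "x \<in> (\<lambda>(sl, a, b, c, cw, cz). (gnp_node Pr sl (recon a b cw) (recon b c cz), sl, b,
        recon a b cw, recon b c cz))
   ` (SLs Pr \<times> V \<times> V \<times> V \<times> insert CD (CSs Pr) \<times> CSs Pr)"
  proof (cases "w = SDummy")
    case True
    then show ?thesis using g z unfolding dd kinv_def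
      by (auto simp: gd_def intro!: image_eqI[of _ _ "(sl, lext z, lext z, rext z, CD, code z)"])
  next
    case False
    then show ?thesis using g z recon_code[of w] unfolding dd kinv_def
      by (auto simp: gd_def intro!: image_eqI[of _ _ "(sl, lext w, lext z, rext z, code w, code z)"])
  qed
qed



theorem theorem3:
  fixes Pr :: "('n \<times> ('n,'t) sym list) set" and S :: 'n
  assumes "finite Pr"
  shows "\<exists>C::nat. \<forall>(V::nat set) (E::(nat \<times> 't \<times> nat) set) Vs Vf \<sigma>.
           finite V \<and> E \<subseteq> V \<times> UNIV \<times> V \<and> Vs \<subseteq> V \<and> Vf \<subseteq> V
           \<and> gll_reachable Pr S E Vs \<sigma>
           \<longrightarrow> gll_finite \<sigma> \<and> gll_space \<sigma> \<le> C * (card V ^ 3 + card E)"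
proof -
  define l where "l = card (LBs Pr)"
  define c where "c = card (insert CD (CSs Pr))"
  define s where "s = card (SLs Pr)"
  have fL: "finite (LBs Pr)" and fC: "finite (insert CD (CSs Pr))" and fC': "finite (CSs Pr)"
    and fS: "finite (SLs Pr)"
    using assms by (auto simp: finite_LBs finite_CSs finite_SLs)
  have cc: "card (CSs Pr) \<le> c" unfolding c_def using fC by (intro card_mono) auto
  define C where "C = 3*(l*l*c) + l*c + l + c + s*c*c"
  show ?thesis
  proof (intro exI[of _ C] allI impI, elim conjE)
    fix V :: "nat set" and E :: "(nat \<times> 't \<times> nat) set" and Vs Vf
      and \<sigma> :: "('n,'t,nat) gll_state"
    assume fV: "finite V" and EV: "E \<subseteq> V \<times> UNIV \<times> V" and VsV: "Vs \<subseteq> V"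
      and r: "gll_reachable Pr S E Vs \<sigma>"
    have I: "Inv Pr V \<sigma>" by (rule reach_inv[OF r VsV EV])
    define n where "n = card V"
    have n2: "n * n \<le> n ^ 3" by (cases n) (auto simp: power3_eq_cube)
    have n1: "n \<le> n ^ 3" by (cases n) (auto simp: power3_eq_cube)
    have gdc: "finite {x. gd Pr V x} \<and> card {x. gd Pr V x} \<le> card (V \<times> V \<times> CSs Pr)"
      by (rule sub_card[OF gd_sub]) (use fV fC' in auto)
    have dc: "finite {x. dinv Pr V x} \<and> card {x. dinv Pr V x}
              \<le> card (LBs Pr \<times> LBs Pr \<times> V \<times> V \<times> insert CD (CSs Pr))"
      by (rule sub_card[OF dinv_sub]) (use fV fC fL in auto)
    have ec: "finite {x. einv Pr V x} \<and> card {x. einv Pr V x}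
              \<le> card (LBs Pr \<times> LBs Pr \<times> V \<times> V \<times> insert CD (CSs Pr))"
      by (rule sub_card[OF einv_sub]) (use fV fC fL in auto)
    have kc: "finite {x. kinv Pr V x} \<and> card {x. kinv Pr V x}
              \<le> card (SLs Pr \<times> V \<times> V \<times> V \<times> insert CD (CSs Pr) \<times> CSs Pr)"
      by (rule sub_card[OF kinv_sub]) (use fV fC fC' fS in auto)
    have pc0: "finite ((LBs Pr \<times> V) \<times> {x. gd Pr V x})" using gdc fL fV by auto
    have pc: "finite {x. pinv Pr V x} \<and> card {x. pinv Pr V x}
              \<le> card ((LBs Pr \<times> V) \<times> {x. gd Pr V x})"
      using pinv_sub[of Pr V] pc0 by (meson card_mono finite_subset)
    have sR: "Rs \<sigma> \<subseteq> {x. dinv Pr V x}" "Us \<sigma> \<subseteq> {x. dinv Pr V x}"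
      "Ps \<sigma> \<subseteq> {x. pinv Pr V x}" "GN \<sigma> \<subseteq> LBs Pr \<times> V" "GE \<sigma> \<subseteq> {x. einv Pr V x}"
      "SN \<sigma> \<subseteq> {x. gd Pr V x}" "PK \<sigma> \<subseteq> {x. kinv Pr V x}"
      using I unfolding Inv_def by auto
    have fin: "gll_finite \<sigma>" unfolding gll_finite_def
      using sR dc ec kc pc gdc fL fV by (meson finite_subset finite_SigmaI)
    have b1: "card (Rs \<sigma>) \<le> l*l*c * n^3" "card (Us \<sigma>) \<le> l*l*c * n^3"
      "card (GE \<sigma>) \<le> l*l*c * n^3"
    proof -
      have "card (LBs Pr \<times> LBs Pr \<times> V \<times> V \<times> insert CD (CSs Pr)) = (l*l*c) * (n*n)"
        by (simp add: card_cartesian_product l_def c_def n_def)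
      also have "\<dots> \<le> l*l*c * n^3" using n2 by simp
      finally have X: "card (LBs Pr \<times> LBs Pr \<times> V \<times> V \<times> insert CD (CSs Pr)) \<le> l*l*c * n^3" .
      show "card (Rs \<sigma>) \<le> l*l*c * n^3" using sR(1) dc X by (meson card_mono le_trans)
      show "card (Us \<sigma>) \<le> l*l*c * n^3" using sR(2) dc X by (meson card_mono le_trans)
      show "card (GE \<sigma>) \<le> l*l*c * n^3" using sR(5) ec X by (meson card_mono le_trans)
    qed
    have gdb: "card {x. gd Pr V x} \<le> c * (n * n)"
    proof -
      have "card (V \<times> V \<times> CSs Pr) = card (CSs Pr) * (n * n)"
        by (simp add: card_cartesian_product n_def)
      also have "\<dots> \<le> c * (n*n)" using cc by simp
      finally show ?thesis using gdc by linarith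
    qed
    have b2: "card (SN \<sigma>) \<le> c * n^3"
    proof -
      have "card (SN \<sigma>) \<le> card {x. gd Pr V x}" using sR(6) gdc by (meson card_mono)
      also have "\<dots> \<le> c * (n*n)" by (rule gdb)
      also have "\<dots> \<le> c * n^3" using n2 by simp
      finally show ?thesis .
    qed
    have b3: "card (GN \<sigma>) \<le> l * n^3"
    proof -
      have "card (GN \<sigma>) \<le> card (LBs Pr \<times> V)" using sR(4) fL fV by (meson card_mono finite_SigmaI)
      also have "\<dots> = l * n" by (simp add: card_cartesian_product l_def n_def)
      also have "\<dots> \<le> l * n^3" using n1 by simp
      finally show ?thesis .
    qed
    have b4: "card (Ps \<sigma>) \<le> l*c * n^3"
    proof -
      have "card (Ps \<sigma>) \<le> card ((LBs Pr \<times> V) \<times> {x. gd Pr V x})" using sR(3) pc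
        by (meson card_mono le_trans)
      also have "\<dots> = l * n * card {x. gd Pr V x}"
        by (simp add: card_cartesian_product l_def n_def)
      also have "\<dots> \<le> l * n * (c * (n*n))" using gdb by simp
      also have "\<dots> = l*c * n^3" by (simp add: power3_eq_cube algebra_simps)
      finally show ?thesis .
    qed
    have b5: "card (PK \<sigma>) \<le> s*c*c * n^3"
    proof -
      have "card (PK \<sigma>) \<le> card (SLs Pr \<times> V \<times> V \<times> V \<times> insert CD (CSs Pr) \<times> CSs Pr)"
        using sR(7) kc by (meson card_mono le_trans)
      also have "\<dots> = s * n * n * n * c * card (CSs Pr)"
        by (simp add: card_cartesian_product s_def n_def c_def)
      also have "\<dots> \<le> s * n * n * n * c * c" using cc by simp
      also have "\<dots> = s*c*c * n^3" by (simp add: power3_eq_cube algebra_simps)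
      finally show ?thesis .
    qed
    have "gll_space \<sigma> \<le> C * n^3"
      unfolding gll_space_def C_def using b1 b2 b3 b4 b5 by (simp add: algebra_simps)
    also have "\<dots> \<le> C * (card V ^ 3 + card E)" by (simp add: n_def)
    finally show "gll_finite \<sigma> \<and> gll_space \<sigma> \<le> C * (card V ^ 3 + card E)" using fin by simp
  qed
qed

end
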